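(* Let $n\ge1$ and let $F\in\mathcal F$ be strictly increasing and continuously differentiable on its support. Define $d_1=\int_0^1F^{-1}(u)\,du$ and, for $i=2,\dots,n$, $$d_i=\min_{q\in[0,1]}\Big\{\int_0^qF^{-1}(u)\,du+(1-q)d_{i-1}\Big\}.$$ Then the minimum expected cost of an online algorithm for OSDC on the instance $(F,n)$ is attained and equals $\sum_{i=1}^n d_i$. (Here $d_i$ is the optimal expected value selected by an online algorithm that must select exactly one of $X_1,\dots,X_i$, minimizing the expected selected value.)
   Context: Let $\mathcal F$ be the family of CDFs of nonnegative random variables with finite mean. In the deferred-contracts model (OSDC) with instance $(F,n)$, $X_1,\dots,X_n$ are i.i.d. with CDF $F$, revealed one at a time; at time $i$, knowing $X_1,\dots,X_i$ and the last time $\ell\ge i-1$ already covered (initially $\ell=0$), an online algorithm chooses an integer $T_i\ge0$ covering times $\ell+1,\dots,\ell+T_i$ at cost $T_iX_i$, with $T_i\ge1$ forced when $\ell=i-1$. Its expected cost is $\mathbb E[\sum_{i=1}^nT_iX_i]$. *)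

theory Defs
  imports "HOL-Probability.Probability"
begin

definition cdf_support :: "(real \<Rightarrow> real) \<Rightarrow> real set" where
  "cdf_support F = {x. \<forall>e>0. F (x - e) < F (x + e)}"

(* Generalised inverse (quantile function) F^{-1}(u) = inf {x. F x \<ge> u}. *)
definition quantile :: "(real \<Rightarrow> real) \<Rightarrow> real \<Rightarrow> real" where
  "quantile F u = Inf {x. u \<le> F x}"

(* d_1 = int_0^1 F^{-1}, d_{i} = min_{q in [0,1]} (int_0^q F^{-1} + (1-q) d_{i-1}).
   Indices 1..n; d 0 is an irrelevant dummy value. *)
fun dval :: "(real \<Rightarrow> real) \<Rightarrow> nat \<Rightarrow> real" where
  "dval F 0 = 0"
| "dval F (Suc 0) = (LBINT u=0..1. quantile F u)"
| "dval F (Suc (Suc i)) =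
     (INF q\<in>{0..1}. (LBINT u=0..q. quantile F u) + (1 - q) * dval F (Suc i))"

(* Deterministic online policy for OSDC on times 1..n.
   pol i x l = T_i, chosen at time i having seen x 1, ..., x i, with l the last covered time. *)
type_synonym policy = "nat \<Rightarrow> (nat \<Rightarrow> real) \<Rightarrow> nat \<Rightarrow> nat"

fun covered :: "policy \<Rightarrow> (nat \<Rightarrow> real) \<Rightarrow> nat \<Rightarrow> nat" where
  "covered pol x 0 = 0"
| "covered pol x (Suc i) = covered pol x i + pol (Suc i) x (covered pol x i)"

definition osdc_cost :: "policy \<Rightarrow> nat \<Rightarrow> (nat \<Rightarrow> real) \<Rightarrow> real" where
  "osdc_cost pol n x = (\<Sum>i=1..n. real (pol i x (covered pol x (i - 1))) * x i)"

definition iid_space :: "real measure \<Rightarrow> nat \<Rightarrow> (nat \<Rightarrow> real) measure" where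
  "iid_space D n = PiM {1..n} (\<lambda>_. D)"

definition online_alg :: "real measure \<Rightarrow> nat \<Rightarrow> policy \<Rightarrow> bool" where
  "online_alg D n pol \<longleftrightarrow>
     (\<forall>i\<in>{1..n}. \<forall>l x y. (\<forall>j\<in>{1..i}. x j = y j) \<longrightarrow> pol i x l = pol i y l) \<and>
     (\<forall>i\<in>{1..n}. \<forall>l. (\<lambda>x. pol i x l) \<in> measurable (iid_space D n) (count_space UNIV)) \<and>
     (\<forall>i\<in>{1..n}. \<forall>x. 1 \<le> pol i x (i - 1))"

definition expected_cost :: "real measure \<Rightarrow> nat \<Rightarrow> policy \<Rightarrow> ennreal" where
  "expected_cost D n pol = (\<integral>\<^sup>+ x. ennreal (osdc_cost pol n x) \<partial>iid_space D n)"

end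

theory Submission
  imports Defs
begin


primrec Jint :: "real measure \<Rightarrow> nat list \<Rightarrow> ((nat \<Rightarrow> real) \<Rightarrow> ennreal) \<Rightarrow> (nat \<Rightarrow> real) \<Rightarrow> ennreal" where
  "Jint D [] f x = f x"
| "Jint D (i # is) f x = (\<integral>\<^sup>+ y. Jint D is f (x(i := y)) \<partial>D)"

lemma Jint_repr:
  assumes D: "prob_space D"
  shows "distinct is \<Longrightarrow> finite A \<Longrightarrow> A \<inter> set is = {} \<Longrightarrow> x \<in> space (PiM A (\<lambda>_. D)) \<Longrightarrow>
    f \<in> borel_measurable (PiM (A \<union> set is) (\<lambda>_. D)) \<Longrightarrow>
    Jint D is f x = (\<integral>\<^sup>+ y. f (merge A (set is) (x, y)) \<partial>PiM (set is) (\<lambda>_. D))"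
proof (induction "is" arbitrary: A x)
  case Nil
  interpret prob_space "PiM {} (\<lambda>_. D)" by (rule prob_space_PiM) (simp add: D)
  have "merge A {} (x, y) = x" for y
    using Nil(4) by (auto simp: merge_def space_PiM PiE_def extensional_def)
  then show ?case by (simp add: emeasure_space_1)
next
  case (Cons i "is")
  interpret product_sigma_finite "\<lambda>_. D"
    by (simp add: product_sigma_finite_def D prob_space_imp_sigma_finite)
  have iA: "i \<notin> A" "i \<notin> set is" using Cons by auto
  have IH: "Jint D is f (x(i := y)) = (\<integral>\<^sup>+ z. f (merge (insert i A) (set is) (x(i:=y), z)) \<partial>PiM (set is) (\<lambda>_. D))"
    if "y \<in> space D" for y
    apply (rule Cons.IH)
    using Cons.prems that by (auto simp: space_PiM PiE_def extensional_def)
  have meas: "(\<lambda>w. f (merge A (insert i (set is)) (x, w))) \<in> borel_measurable (PiM (insert i (set is)) (\<lambda>_. D))"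
  proof -
    have "(\<lambda>w. merge A (insert i (set is)) (x, w)) \<in> measurable (PiM (insert i (set is)) (\<lambda>_. D)) (PiM (A \<union> insert i (set is)) (\<lambda>_. D))"
      by (rule measurable_compose[OF _ measurable_merge]) (use Cons.prems in auto)
    moreover have "A \<union> insert i (set is) = A \<union> set (i # is)" by auto
    ultimately show ?thesis using Cons.prems(5) by (metis measurable_compose)
  qed
  have "(\<integral>\<^sup>+ w. f (merge A (insert i (set is)) (x, w)) \<partial>PiM (insert i (set is)) (\<lambda>_. D))
     = (\<integral>\<^sup>+ y. (\<integral>\<^sup>+ z. f (merge A (insert i (set is)) (x, z(i := y))) \<partial>PiM (set is) (\<lambda>_. D)) \<partial>D)"
    by (rule product_nn_integral_insert_rev[OF _ _ meas]) (simp_all add: iA)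
  also have "\<dots> = (\<integral>\<^sup>+ y. Jint D is f (x(i := y)) \<partial>D)"
    apply (rule nn_integral_cong)
    apply (subst IH, simp)
    apply (rule nn_integral_cong)
    using iA by (auto simp: merge_def intro!: arg_cong[where f=f])
  finally show ?case by simp
qed



lemma I_facts:
  assumes D: "real_distribution D"
  shows "distr (restrict_space lborel {0<..<1::real}) borel (quantile (cdf D)) = D"
    and "quantile (cdf D) \<in> borel_measurable (restrict_space lborel {0<..<1})"
    and "\<And>\<omega> x. 0<\<omega> \<Longrightarrow> \<omega><1 \<Longrightarrow> \<omega> \<le> cdf D x \<longleftrightarrow> quantile (cdf D) \<omega> \<le> x"
proof -
  interpret cdf_distribution D by (simp add: cdf_distribution_def D)
  have q: "quantile (cdf D) = I" by (simp add: quantile_def[abs_def])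
  show "distr (restrict_space lborel {0<..<1::real}) borel (quantile (cdf D)) = D"
    using distr_I_eq_M q by simp
  show "quantile (cdf D) \<in> borel_measurable (restrict_space lborel {0<..<1})"
  proof -
    have "sets (restrict_space lborel {0<..<1::real}) = sets (restrict_space borel {0<..<1})"
      by (rule sets_restrict_space_cong) simp
    note S = this
    show ?thesis unfolding q using measurable_CI measurable_cong_sets[OF S refl] by simp
  qed
  show "\<And>\<omega> x. 0<\<omega> \<Longrightarrow> \<omega><1 \<Longrightarrow> \<omega> \<le> cdf D x \<longleftrightarrow> quantile (cdf D) \<omega> \<le> x"
    unfolding q by (rule pseudoinverse)
qed

lemma transfer_int:
  fixes g :: "real \<Rightarrow> real"
  assumes D: "real_distribution D" and g: "g \<in> borel_measurable borel" and ig: "integrable D g"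
  shows "integrable lborel (\<lambda>\<omega>. indicator {0<..<1} \<omega> * g (quantile (cdf D) \<omega>))"
    and "(\<integral>x. g x \<partial>D) = (\<integral>\<omega>. indicator {0<..<1} \<omega> * g (quantile (cdf D) \<omega>) \<partial>lborel)"
proof -
  note F = I_facts[OF D]
  have "integrable (restrict_space lborel {0<..<1::real}) (\<lambda>\<omega>. g (quantile (cdf D) \<omega>))"
    using integrable_distr_eq[OF F(2) g] ig F(1) by simp
  then show "integrable lborel (\<lambda>\<omega>. indicator {0<..<1} \<omega> * g (quantile (cdf D) \<omega>))"
    by (subst (asm) integrable_restrict_space) auto
  have "(\<integral>x. g x \<partial>D) = (\<integral>\<omega>. g (quantile (cdf D) \<omega>) \<partial>restrict_space lborel {0<..<1::real})"
    using integral_distr[OF F(2) g] F(1) by simp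
  also have "\<dots> = (\<integral>\<omega>. indicator {0<..<1} \<omega> * g (quantile (cdf D) \<omega>) \<partial>lborel)"
    by (subst integral_restrict_space) auto
  finally show "(\<integral>x. g x \<partial>D) = (\<integral>\<omega>. indicator {0<..<1} \<omega> * g (quantile (cdf D) \<omega>) \<partial>lborel)" .
qed

lemma LBINT_eq:
  fixes f :: "real \<Rightarrow> real"
  assumes "0 \<le> q"
  shows "(LBINT u=0..q. f u) = (\<integral>\<omega>. indicator {0<..<q::real} \<omega> * f \<omega> \<partial>lborel)"
proof -
  have "einterval 0 (ereal q) = {0<..<q}" by (auto simp: einterval_def zero_ereal_def)
  then show ?thesis using assms by (simp add: interval_lebesgue_integral_def set_lebesgue_integral_def zero_ereal_def)
qed

lemma G_repr:
  assumes D: "real_distribution D" and int: "integrable D (\<lambda>x. x)" and q: "0 \<le> q" "q \<le> 1"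
  shows "(LBINT u=0..q. quantile (cdf D) u) + (1-q)*d
     = (\<integral>\<omega>. indicator {0<..<q} \<omega> * quantile (cdf D) \<omega> + indicator {q<..<1} \<omega> * d \<partial>lborel)"
    and "integrable lborel (\<lambda>\<omega>. indicator {0<..<q} \<omega> * quantile (cdf D) \<omega> + indicator {q<..<1} \<omega> * d)"
proof -
  let ?Q = "quantile (cdf D)"
  have h1: "integrable lborel (\<lambda>\<omega>. indicator {0<..<1} \<omega> * ?Q \<omega>)"
    using transfer_int(1)[OF D _ int] by simp
  have h2: "integrable lborel (\<lambda>\<omega>. indicator {0<..<q} \<omega> * ?Q \<omega>)"
  proof -
    have "integrable lborel (\<lambda>\<omega>. indicator {0<..<q} \<omega> *\<^sub>R (indicator {0<..<1} \<omega> * ?Q \<omega>))"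
      by (rule integrable_mult_indicator[OF _ h1]) simp
    moreover have "indicator {0<..<q} \<omega> *\<^sub>R (indicator {0<..<1} \<omega> * ?Q \<omega>) = indicator {0<..<q} \<omega> * ?Q \<omega>" for \<omega> :: real
      using q by (auto simp: indicator_def)
    ultimately show ?thesis by (simp only:)
  qed
  have h3: "integrable lborel (\<lambda>\<omega>. indicator {q<..<1::real} \<omega> * d)"
    by (intro integrable_mult_left integrable_real_indicator) (use q in auto)
  have m3: "(\<integral>\<omega>. indicator {q<..<1::real} \<omega> * d \<partial>lborel) = (1-q)*d"
    using q by simp
  show "integrable lborel (\<lambda>\<omega>. indicator {0<..<q} \<omega> * ?Q \<omega> + indicator {q<..<1} \<omega> * d)"
    using h2 h3 by simp
  show "(LBINT u=0..q. ?Q u) + (1-q)*d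
     = (\<integral>\<omega>. indicator {0<..<q} \<omega> * ?Q \<omega> + indicator {q<..<1} \<omega> * d \<partial>lborel)"
    unfolding LBINT_eq[OF q(1)] Bochner_Integration.integral_add[OF h2 h3] m3 by (rule refl)
qed

lemma INF_eq:
  assumes D: "real_distribution D" and int: "integrable D (\<lambda>x. x)"
  shows "(INF q\<in>{0..1}. (LBINT u=0..q. quantile (cdf D) u) + (1 - q) * d) = (\<integral>x. min x d \<partial>D)"
proof -
  interpret real_distribution D by (rule D)
  let ?Q = "quantile (cdf D)"
  let ?G = "\<lambda>q. (LBINT u=0..q. ?Q u) + (1 - q) * d"
  let ?E = "\<integral>x. min x d \<partial>D"
  have iE: "integrable D (\<lambda>x. min x d)" using int by auto
  have E: "?E = (\<integral>\<omega>. indicator {0<..<1} \<omega> * min (?Q \<omega>) d \<partial>lborel)"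
    and hE: "integrable lborel (\<lambda>\<omega>. indicator {0<..<1} \<omega> * min (?Q \<omega>) d)"
    using transfer_int[OF D _ iE] by auto
  note PI = I_facts(3)[OF D]
  have lower: "?E \<le> ?G q" if q: "0 \<le> q" "q \<le> 1" for q
  proof -
    have "?E \<le> (\<integral>\<omega>. indicator {0<..<q} \<omega> * ?Q \<omega> + indicator {q<..<1} \<omega> * d \<partial>lborel)"
      unfolding E
    proof (rule integral_mono_AE[OF hE G_repr(2)[OF D int q]])
      show "AE \<omega> in lborel. indicator {0<..<1} \<omega> * min (?Q \<omega>) d
          \<le> indicator {0<..<q} \<omega> * ?Q \<omega> + indicator {q<..<1} \<omega> * d"
        using AE_lborel_singleton[of q]
        by eventually_elim (use q in \<open>auto simp: indicator_def\<close>)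
    qed
    then show ?thesis using G_repr(1)[OF D int q] by simp
  qed
  let ?q0 = "cdf D d"
  have q0: "0 \<le> ?q0" "?q0 \<le> 1" by (auto simp: cdf_nonneg cdf_bounded_prob)
  have eq: "?G ?q0 = ?E"
  proof -
    have "?E = (\<integral>\<omega>. indicator {0<..<?q0} \<omega> * ?Q \<omega> + indicator {?q0<..<1} \<omega> * d \<partial>lborel)"
      unfolding E
    proof (rule integral_cong_AE)
      show "AE \<omega> in lborel. indicator {0<..<1} \<omega> * min (?Q \<omega>) d
          = indicator {0<..<?q0} \<omega> * ?Q \<omega> + indicator {?q0<..<1} \<omega> * d"
        using AE_lborel_singleton[of ?q0]
      proof eventually_elim
        case (elim \<omega>)
        show ?case
        proof (cases "0 < \<omega> \<and> \<omega> < 1")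
          case True
          then show ?thesis using PI[of \<omega> d] elim q0 by (auto simp: indicator_def min_def)
        next
          case False
          then show ?thesis using q0 by (auto simp: indicator_def)
        qed
      qed
    qed (use borel_measurable_integrable[OF hE] borel_measurable_integrable[OF G_repr(2)[OF D int q0]] in simp_all)
    then show ?thesis using G_repr(1)[OF D int q0] by simp
  qed
  show ?thesis
  proof (rule antisym)
    show "(INF q\<in>{0..1}. ?G q) \<le> ?E"
      using q0 eq lower by (metis (no_types, lifting) atLeastAtMost_iff bdd_belowI2 cINF_lower)
    show "?E \<le> (INF q\<in>{0..1}. ?G q)"
      by (rule cINF_greatest) (use lower in auto)
  qed
qed

primrec esq :: "real measure \<Rightarrow> nat \<Rightarrow> real" where
  "esq D 0 = (\<integral>x. x \<partial>D)"
| "esq D (Suc k) = (\<integral>x. min x (esq D k) \<partial>D)"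

lemma dval_esq:
  assumes D: "real_distribution D" and int: "integrable D (\<lambda>x. x)"
  shows "dval (cdf D) (Suc k) = esq D k"
proof (induction k)
  case 0
  have "dval (cdf D) (Suc 0) = (\<integral>\<omega>. indicator {0<..<1} \<omega> * quantile (cdf D) \<omega> \<partial>lborel)"
    using LBINT_eq[of 1] by (simp add: one_ereal_def)
  also have "\<dots> = (\<integral>x. x \<partial>D)" using transfer_int(2)[OF D _ int] by simp
  finally show ?case by simp
next
  case (Suc k)
  then show ?case using INF_eq[OF D int, of "esq D k"] by simp
qed

lemma esq_props:
  assumes D: "real_distribution D" and int: "integrable D (\<lambda>x. x)" and nn: "AE x in D. 0 \<le> x"
  shows "0 \<le> esq D k" and "esq D (Suc k) \<le> esq D k"
proof -
  interpret real_distribution D by (rule D)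
  show "0 \<le> esq D k"
  proof (induction k)
    case 0 then show ?case using nn by (simp add: integral_nonneg_AE)
  next
    case (Suc k) then show ?case using nn
      by (simp, intro integral_nonneg_AE) (auto elim!: eventually_mono)
  qed
  show "esq D (Suc k) \<le> esq D k"
  proof (induction k)
    case 0 then show ?case using int by (simp, intro integral_mono) auto
  next
    case (Suc k) then show ?case using int by (simp, intro integral_mono) auto
  qed
qed



definition mval :: "(nat \<Rightarrow> real) \<Rightarrow> nat \<Rightarrow> nat \<Rightarrow> real \<Rightarrow> real" where
  "mval e i t y = (if t = i then y else min y (e (t - Suc i)))"

definition Vf :: "(nat \<Rightarrow> real) \<Rightarrow> nat \<Rightarrow> nat \<Rightarrow> nat \<Rightarrow> real" where
  "Vf e n i l = (\<Sum>t\<in>{Suc l..n}. e (t - i))"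

lemma split_ival:
  assumes "l \<le> k" "k \<le> n"
  shows "(\<Sum>t\<in>{Suc l..n}. f t) = (\<Sum>t\<in>{Suc l..k}. f t) + (\<Sum>t\<in>{Suc k..n}. (f t :: real))"
proof -
  have "{Suc l..n} = {Suc l..k} \<union> {Suc k..n}" using assms by auto
  then show ?thesis by (simp add: sum.union_disjoint ivl_disj_int)
qed

lemma LB_pt:
  assumes il: "i \<le> Suc l" and T: "l = i - 1 \<longrightarrow> 1 \<le> T" and y: "0 \<le> y" and i1: "1 \<le> i"
  shows "(\<Sum>t\<in>{Suc l..n}. mval e i t y) \<le> real T * y + Vf e n (Suc i) (l + T)"
proof -
  define k where "k = min (l + T) n"
  have A: "{Suc k..n} = {Suc (l+T)..n}" by (auto simp: k_def)
  show ?thesis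
  proof (cases "l \<le> n")
    case True
    have kk: "l \<le> k" "k \<le> n" using True by (auto simp: k_def)
    have s1: "(\<Sum>t\<in>{Suc l..k}. mval e i t y) \<le> real T * y"
    proof -
      have "(\<Sum>t\<in>{Suc l..k}. mval e i t y) \<le> (\<Sum>t\<in>{Suc l..k}. y)"
        by (rule sum_mono) (auto simp: mval_def)
      also have "\<dots> = real (k - l) * y" by simp
      also have "\<dots> \<le> real T * y" using y by (intro mult_right_mono) (auto simp: k_def)
      finally show ?thesis .
    qed
    have s2: "(\<Sum>t\<in>{Suc k..n}. mval e i t y) \<le> Vf e n (Suc i) (l + T)"
      unfolding Vf_def A
    proof (rule sum_mono)
      fix t assume "t \<in> {Suc (l + T)..n}"
      then have "t \<noteq> i" using il T i1 by (cases "i = Suc l") auto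
      then show "mval e i t y \<le> e (t - Suc i)" by (simp add: mval_def)
    qed
    show ?thesis using split_ival[OF kk, of "\<lambda>t. mval e i t y"] s1 s2 by simp
  next
    case False
    then have "{Suc l..n} = {}" by auto
    moreover have "0 \<le> real T * y" using y by simp
    moreover have "Vf e n (Suc i) (l + T) = 0" using False by (simp add: Vf_def)
    ultimately show ?thesis by simp
  qed
qed

lemma init_seg:
  fixes S :: "nat set"
  assumes S: "S \<subseteq> {a..b}" and cl: "\<And>s t. t \<in> S \<Longrightarrow> a \<le> s \<Longrightarrow> s \<le> t \<Longrightarrow> s \<in> S"
  shows "S = {a..<a + card S}"
proof (cases "S = {}")
  case True then show ?thesis by simp
next
  case False
  have fin: "finite S" using S finite_subset by blast
  define M where "M = Max S"
  have MS: "M \<in> S" using fin False by (simp add: M_def)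
  have "S = {a..M}"
  proof
    show "S \<subseteq> {a..M}" using S fin by (auto simp: M_def)
    show "{a..M} \<subseteq> S" using cl MS by auto
  qed
  moreover have "a \<le> M" using MS S by auto
  ultimately show ?thesis by auto
qed

lemma EQ_pt:
  assumes anti: "\<And>a b. a \<le> b \<Longrightarrow> e b \<le> e a" and il: "i \<le> Suc l"
    and T: "T = card {t\<in>{Suc l..n}. t = i \<or> y \<le> e (t - Suc i)}"
  shows "(\<Sum>t\<in>{Suc l..n}. mval e i t y) = real T * y + Vf e n (Suc i) (l + T)"
proof -
  define S where "S = {t\<in>{Suc l..n}. t = i \<or> y \<le> e (t - Suc i)}"
  have S1: "S \<subseteq> {Suc l..n}" by (auto simp: S_def)
  have cl: "s \<in> S" if "t \<in> S" "Suc l \<le> s" "s \<le> t" for s t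
  proof -
    have "s \<le> n" using that by (auto simp: S_def)
    moreover have "s = i \<or> y \<le> e (s - Suc i)"
    proof (cases "s = i")
      case False
      then have "t \<noteq> i" using that il by auto
      then have "y \<le> e (t - Suc i)" using that by (auto simp: S_def)
      also have "\<dots> \<le> e (s - Suc i)" using that by (intro anti) auto
      finally show ?thesis by simp
    qed simp
    ultimately show ?thesis using that by (auto simp: S_def)
  qed
  have cS: "card S = T" unfolding S_def T ..
  have Seq: "S = {Suc l..<Suc l + T}" using init_seg[OF S1 cl] unfolding cS .
  have Tn: "l + T \<le> n \<or> T = 0"
  proof (cases "T = 0")
    case False
    then have "l + T \<in> S" unfolding Seq by auto
    then show ?thesis using S1 by auto
  qed simp
  show ?thesis
  proof (cases "l \<le> n")
    case True
    then have kk: "l \<le> l + T" "l + T \<le> n" using Tn by auto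
    have s1: "(\<Sum>t\<in>{Suc l..l+T}. mval e i t y) = real T * y"
    proof -
      have "(\<Sum>t\<in>{Suc l..l+T}. mval e i t y) = (\<Sum>t\<in>{Suc l..l+T}. y)"
      proof (rule sum.cong)
        fix t assume "t \<in> {Suc l..l+T}"
        then have "t \<in> S" unfolding Seq by auto
        then show "mval e i t y = y" by (auto simp: S_def mval_def)
      qed simp
      then show ?thesis by simp
    qed
    have s2: "(\<Sum>t\<in>{Suc (l+T)..n}. mval e i t y) = Vf e n (Suc i) (l + T)"
      unfolding Vf_def
    proof (rule sum.cong)
      fix t assume t: "t \<in> {Suc (l+T)..n}"
      then have "t \<notin> S" unfolding Seq by auto
      then have "t \<noteq> i" "\<not> y \<le> e (t - Suc i)" using t il by (auto simp: S_def)
      then show "mval e i t y = e (t - Suc i)" by (simp add: mval_def)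
    qed simp
    show ?thesis using split_ival[OF kk, of "\<lambda>t. mval e i t y"] s1 s2 by simp
  next
    case False
    then have "S = {}" using S1 by auto
    then have "T = 0" using T S_def by simp
    moreover have "{Suc l..n} = {}" using False by auto
    ultimately show ?thesis using False by (simp add: Vf_def)
  qed
qed



lemma cov_ge:
  assumes f: "\<forall>i\<in>{1..n}. \<forall>x. 1 \<le> pol i x (i - 1)"
  shows "k \<le> n \<Longrightarrow> k \<le> covered pol x k"
proof (induction k)
  case (Suc k)
  then have "k \<le> covered pol x k" by simp
  moreover have "covered pol x k = k \<Longrightarrow> 1 \<le> pol (Suc k) x (covered pol x k)"
    using f Suc.prems by force
  ultimately show ?case by (cases "covered pol x k = k") auto
qed simp

lemma cov_na:
  assumes na: "\<forall>i\<in>{1..n}. \<forall>l x y. (\<forall>j\<in>{1..i}. x j = y j) \<longrightarrow> pol i x l = pol i y l"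
  shows "k \<le> n \<Longrightarrow> (\<forall>j\<in>{1..k}. x j = y j) \<Longrightarrow> covered pol x k = covered pol y k"
proof (induction k)
  case (Suc k)
  then have "covered pol x k = covered pol y k" by auto
  moreover have "pol (Suc k) x l = pol (Suc k) y l" for l
    by (rule na[rule_format]) (use Suc.prems in auto)
  ultimately show ?case by simp
qed simp

definition pre :: "policy \<Rightarrow> nat \<Rightarrow> (nat \<Rightarrow> real) \<Rightarrow> real" where
  "pre pol i x = (\<Sum>j\<in>{1..<i}. real (pol j x (covered pol x (j - 1))) * x j)"

lemma pre_nonneg: "(\<forall>j\<in>{1..<i}. 0 \<le> x j) \<Longrightarrow> 0 \<le> pre pol i x"
  unfolding pre_def by (intro sum_nonneg) auto

lemma step_facts:
  assumes na: "\<forall>i\<in>{1..n}. \<forall>l x y. (\<forall>j\<in>{1..i}. x j = y j) \<longrightarrow> pol i x l = pol i y l"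
    and i: "1 \<le> i" "i \<le> n"
  shows "covered pol (x(i:=y)) (i - 1) = covered pol x (i - 1)"
    and "covered pol (x(i:=y)) i = covered pol x (i - 1) + pol i (x(i:=y)) (covered pol x (i - 1))"
    and "pre pol (Suc i) (x(i:=y)) = pre pol i x + real (pol i (x(i:=y)) (covered pol x (i - 1))) * y"
proof -
  have c: "covered pol (x(i:=y)) k = covered pol x k" if "k < i" for k
    using cov_na[OF na, of k "x(i:=y)" x] that i by auto
  show c1: "covered pol (x(i:=y)) (i - 1) = covered pol x (i - 1)" using c i by simp
  obtain k where k: "i = Suc k" using i by (cases i) auto
  then have "covered pol (x(i:=y)) i = covered pol (x(i:=y)) (i - 1) + pol i (x(i:=y)) (covered pol (x(i:=y)) (i - 1))"
    by (simp del: fun_upd_apply)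
  then show "covered pol (x(i:=y)) i = covered pol x (i - 1) + pol i (x(i:=y)) (covered pol x (i - 1))"
    using c1 by simp
  have t: "real (pol j (x(i:=y)) (covered pol (x(i:=y)) (j - 1))) * (x(i:=y)) j
      = real (pol j x (covered pol x (j - 1))) * x j" if "j \<in> {1..<i}" for j
  proof -
    have j: "j \<in> {1..n}" using that i by auto
    have a: "\<forall>k\<in>{1..j}. (x(i:=y)) k = x k" using that by auto
    have "pol j (x(i:=y)) l = pol j x l" for l
      by (rule na[rule_format, OF j]) (use a in auto)
    moreover have "covered pol (x(i:=y)) (j - 1) = covered pol x (j - 1)" using c that by auto
    ultimately show ?thesis using that by simp
  qed
  have "pre pol (Suc i) (x(i:=y)) = pre pol i (x(i:=y)) + real (pol i (x(i:=y)) (covered pol (x(i:=y)) (i - 1))) * y"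
    unfolding pre_def using i by (simp add: atLeastLessThanSuc)
  also have "pre pol i (x(i:=y)) = pre pol i x"
    unfolding pre_def by (rule sum.cong) (use t in auto)
  finally show "pre pol (Suc i) (x(i:=y)) = pre pol i x + real (pol i (x(i:=y)) (covered pol x (i - 1))) * y"
    by (simp only: c1)
qed

lemma int_m:
  assumes D: "real_distribution D" and int: "integrable D (\<lambda>x. x)" and t: "i \<le> t"
  shows "integrable D (mval (esq D) i t)" and "(\<integral>y. mval (esq D) i t y \<partial>D) = esq D (t - i)"
proof -
  interpret real_distribution D by (rule D)
  have "integrable D (mval (esq D) i t) \<and> (\<integral>y. mval (esq D) i t y \<partial>D) = esq D (t - i)"
  proof (cases "t = i")
    case True
    then have "mval (esq D) i t = (\<lambda>y. y)" by (auto simp: mval_def)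
    then show ?thesis using True int by simp
  next
    case False
    then have "mval (esq D) i t = (\<lambda>y. min y (esq D (t - Suc i)))" by (auto simp: mval_def)
    moreover have "t - i = Suc (t - Suc i)" using False t by simp
    ultimately show ?thesis using int by simp
  qed
  then show "integrable D (mval (esq D) i t)" and "(\<integral>y. mval (esq D) i t y \<partial>D) = esq D (t - i)" by auto
qed

lemma int_sum_m:
  assumes D: "real_distribution D" and int: "integrable D (\<lambda>x. x)" and nn: "AE x in D. 0 \<le> x"
    and p: "0 \<le> p" and il: "i \<le> Suc l"
  shows "(\<integral>\<^sup>+ y. ennreal (p + (\<Sum>t\<in>{Suc l..n}. mval (esq D) i t y)) \<partial>D) = ennreal (p + Vf (esq D) n i l)"
proof -
  interpret real_distribution D by (rule D)
  have it: "t \<in> {Suc l..n} \<Longrightarrow> integrable D (mval (esq D) i t)" for t using int_m(1)[OF D int, of i t] il by simp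
  have iS: "integrable D (\<lambda>y. \<Sum>t\<in>{Suc l..n}. mval (esq D) i t y)"
    by (rule Bochner_Integration.integrable_sum) (use it in auto)
  have ii: "integrable D (\<lambda>y. p + (\<Sum>t\<in>{Suc l..n}. mval (esq D) i t y))"
    using iS by simp
  have "AE y in D. 0 \<le> p + (\<Sum>t\<in>{Suc l..n}. mval (esq D) i t y)"
    using nn
  proof eventually_elim
    case (elim y)
    have "0 \<le> mval (esq D) i t y" for t
      using elim esq_props(1)[OF D int nn] by (simp add: mval_def)
    then show ?case using p by (simp add: sum_nonneg)
  qed
  then have "(\<integral>\<^sup>+ y. ennreal (p + (\<Sum>t\<in>{Suc l..n}. mval (esq D) i t y)) \<partial>D)
      = ennreal (\<integral>y. p + (\<Sum>t\<in>{Suc l..n}. mval (esq D) i t y) \<partial>D)"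
    by (rule nn_integral_eq_integral[OF ii])
  also have "(\<integral>y. p + (\<Sum>t\<in>{Suc l..n}. mval (esq D) i t y) \<partial>D) = p + (\<Sum>t\<in>{Suc l..n}. \<integral>y. mval (esq D) i t y \<partial>D)"
  proof -
    have e1: "(\<integral>y. p + (\<Sum>t\<in>{Suc l..n}. mval (esq D) i t y) \<partial>D) = (\<integral>y. p \<partial>D) + (\<integral>y. (\<Sum>t\<in>{Suc l..n}. mval (esq D) i t y) \<partial>D)"
      by (rule Bochner_Integration.integral_add) (use iS in auto)
    have ps1: "measure D (space D) = 1" by (rule prob_space)
    have e2: "(\<integral>y. p \<partial>D) = p" using ps1 by simp
    have e3: "(\<integral>y. (\<Sum>t\<in>{Suc l..n}. mval (esq D) i t y) \<partial>D) = (\<Sum>t\<in>{Suc l..n}. \<integral>y. mval (esq D) i t y \<partial>D)"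
      by (rule Bochner_Integration.integral_sum) (use it in auto)
    show ?thesis unfolding e1 e2 e3 ..
  qed
  also have "(\<Sum>t\<in>{Suc l..n}. \<integral>y. mval (esq D) i t y \<partial>D) = Vf (esq D) n i l"
    unfolding Vf_def by (rule sum.cong) (use int_m(2)[OF D int] il in auto)
  finally show ?thesis .
qed

lemma DP_lb:
  assumes D: "real_distribution D" and int: "integrable D (\<lambda>x. x)" and nn: "AE x in D. 0 \<le> x"
    and na: "\<forall>i\<in>{1..n}. \<forall>l x y. (\<forall>j\<in>{1..i}. x j = y j) \<longrightarrow> pol i x l = pol i y l"
    and f: "\<forall>i\<in>{1..n}. \<forall>x. 1 \<le> pol i x (i - 1)"
    and i: "1 \<le> i" "i \<le> Suc n"
  shows "\<forall>x. (\<forall>j\<in>{1..<i}. 0 \<le> x j) \<longrightarrow> ennreal (pre pol i x + Vf (esq D) n i (covered pol x (i - 1)))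
          \<le> Jint D [i..<Suc n] (\<lambda>x. ennreal (pre pol (Suc n) x)) x"
  using i(2)
proof (induction rule: inc_induct)
  case base
  show ?case
  proof (intro allI impI)
    fix x :: "nat \<Rightarrow> real"
    have "n \<le> covered pol x n" using cov_ge[where n=n and pol=pol, OF f] by simp
    then have "Vf (esq D) n (Suc n) (covered pol x (Suc n - 1)) = 0" by (simp add: Vf_def)
    then show "ennreal (pre pol (Suc n) x + Vf (esq D) n (Suc n) (covered pol x (Suc n - 1)))
          \<le> Jint D [Suc n..<Suc n] (\<lambda>x. ennreal (pre pol (Suc n) x)) x" by simp
  qed
next
  case (step m)
  have m1: "1 \<le> m" "m \<le> n" using step.hyps i by auto
  show ?case
  proof (intro allI impI)
    fix x :: "nat \<Rightarrow> real"
    assume xn: "\<forall>j\<in>{1..<m}. 0 \<le> x j"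
    define l where "l = covered pol x (m - 1)"
    have "m - 1 \<le> covered pol x (m - 1)" by (rule cov_ge[where n=n and pol=pol, OF f]) (use m1 in simp)
    then have lm: "m \<le> Suc l" unfolding l_def by linarith
    have lst: "[m..<Suc n] = m # [Suc m..<Suc n]" using m1 by (simp add: upt_conv_Cons)
    have p0: "0 \<le> pre pol m x" using pre_nonneg xn by blast
    have pw: "AE y in D. ennreal (pre pol m x + (\<Sum>t\<in>{Suc l..n}. mval (esq D) m t y))
        \<le> Jint D [Suc m..<Suc n] (\<lambda>x. ennreal (pre pol (Suc n) x)) (x(m:=y))"
      using nn
    proof eventually_elim
      case (elim y)
      define T where "T = pol m (x(m:=y)) l"
      have xn': "\<forall>j\<in>{1..<Suc m}. 0 \<le> (x(m:=y)) j" using xn elim by auto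
      have IH: "ennreal (pre pol (Suc m) (x(m:=y)) + Vf (esq D) n (Suc m) (covered pol (x(m:=y)) m))
          \<le> Jint D [Suc m..<Suc n] (\<lambda>x. ennreal (pre pol (Suc n) x)) (x(m:=y))"
        using mp[OF spec[OF step.IH, of "x(m:=y)"] xn'] by (simp del: fun_upd_apply upt_Suc)
      have c: "covered pol (x(m:=y)) m = l + T" and pr: "pre pol (Suc m) (x(m:=y)) = pre pol m x + real T * y"
        using step_facts[OF na m1, of x y] by (simp_all add: l_def T_def)
      have fT: "l = m - 1 \<longrightarrow> 1 \<le> T" using f m1 by (auto simp: T_def)
      have "(\<Sum>t\<in>{Suc l..n}. mval (esq D) m t y) \<le> real T * y + Vf (esq D) n (Suc m) (l + T)"
        by (rule LB_pt[OF lm fT elim m1(1)])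
      then have "ennreal (pre pol m x + (\<Sum>t\<in>{Suc l..n}. mval (esq D) m t y))
          \<le> ennreal (pre pol (Suc m) (x(m:=y)) + Vf (esq D) n (Suc m) (covered pol (x(m:=y)) m))"
        unfolding c pr by (intro ennreal_leI) simp
      then show ?case using IH by (rule order.trans)
    qed
    have "ennreal (pre pol m x + Vf (esq D) n m (covered pol x (m - 1)))
        = (\<integral>\<^sup>+ y. ennreal (pre pol m x + (\<Sum>t\<in>{Suc l..n}. mval (esq D) m t y)) \<partial>D)"
      using int_sum_m[OF D int nn p0 lm] by (simp add: l_def)
    also have "\<dots> \<le> (\<integral>\<^sup>+ y. Jint D [Suc m..<Suc n] (\<lambda>x. ennreal (pre pol (Suc n) x)) (x(m:=y)) \<partial>D)"
      by (rule nn_integral_mono_AE[OF pw])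
    also have "\<dots> = Jint D [m..<Suc n] (\<lambda>x. ennreal (pre pol (Suc n) x)) x"
      unfolding lst by simp
    finally show "ennreal (pre pol m x + Vf (esq D) n m (covered pol x (m - 1)))
        \<le> Jint D [m..<Suc n] (\<lambda>x. ennreal (pre pol (Suc n) x)) x" .
  qed
qed

definition thpol :: "real measure \<Rightarrow> nat \<Rightarrow> policy" where
  "thpol D n i x l = card {t\<in>{Suc l..n}. t = i \<or> x i \<le> esq D (t - Suc i)}"

lemma DP_eq:
  assumes D: "real_distribution D" and int: "integrable D (\<lambda>x. x)" and nn: "AE x in D. 0 \<le> x"
    and pol: "pol = thpol D n"
    and na: "\<forall>i\<in>{1..n}. \<forall>l x y. (\<forall>j\<in>{1..i}. x j = y j) \<longrightarrow> pol i x l = pol i y l"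
    and f: "\<forall>i\<in>{1..n}. \<forall>x. 1 \<le> pol i x (i - 1)"
    and i: "1 \<le> i" "i \<le> Suc n"
  shows "\<forall>x. (\<forall>j\<in>{1..<i}. 0 \<le> x j) \<longrightarrow> ennreal (pre pol i x + Vf (esq D) n i (covered pol x (i - 1)))
          = Jint D [i..<Suc n] (\<lambda>x. ennreal (pre pol (Suc n) x)) x"
  using i(2)
proof (induction rule: inc_induct)
  case base
  show ?case
  proof (intro allI impI)
    fix x :: "nat \<Rightarrow> real"
    have "n \<le> covered pol x n" using cov_ge[where n=n and pol=pol, OF f] by simp
    then have "Vf (esq D) n (Suc n) (covered pol x (Suc n - 1)) = 0" by (simp add: Vf_def)
    then show "ennreal (pre pol (Suc n) x + Vf (esq D) n (Suc n) (covered pol x (Suc n - 1)))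
          = Jint D [Suc n..<Suc n] (\<lambda>x. ennreal (pre pol (Suc n) x)) x" by simp
  qed
next
  case (step m)
  have m1: "1 \<le> m" "m \<le> n" using step.hyps i by auto
  have anti: "\<And>a b. a \<le> b \<Longrightarrow> esq D b \<le> esq D a"
    using esq_props(2)[OF D int nn] by (metis lift_Suc_antimono_le)
  show ?case
  proof (intro allI impI)
    fix x :: "nat \<Rightarrow> real"
    assume xn: "\<forall>j\<in>{1..<m}. 0 \<le> x j"
    define l where "l = covered pol x (m - 1)"
    have "m - 1 \<le> covered pol x (m - 1)" by (rule cov_ge[where n=n and pol=pol, OF f]) (use m1 in simp)
    then have lm: "m \<le> Suc l" unfolding l_def by linarith
    have lst: "[m..<Suc n] = m # [Suc m..<Suc n]" using m1 by (simp add: upt_conv_Cons)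
    have p0: "0 \<le> pre pol m x" using pre_nonneg xn by blast
    have pw: "AE y in D. ennreal (pre pol m x + (\<Sum>t\<in>{Suc l..n}. mval (esq D) m t y))
        = Jint D [Suc m..<Suc n] (\<lambda>x. ennreal (pre pol (Suc n) x)) (x(m:=y))"
      using nn
    proof eventually_elim
      case (elim y)
      define T where "T = pol m (x(m:=y)) l"
      have xn': "\<forall>j\<in>{1..<Suc m}. 0 \<le> (x(m:=y)) j" using xn elim by auto
      have IH: "ennreal (pre pol (Suc m) (x(m:=y)) + Vf (esq D) n (Suc m) (covered pol (x(m:=y)) m))
          = Jint D [Suc m..<Suc n] (\<lambda>x. ennreal (pre pol (Suc n) x)) (x(m:=y))"
        using mp[OF spec[OF step.IH, of "x(m:=y)"] xn'] by (simp del: fun_upd_apply upt_Suc)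
      have c: "covered pol (x(m:=y)) m = l + T" and pr: "pre pol (Suc m) (x(m:=y)) = pre pol m x + real T * y"
        using step_facts[OF na m1, of x y] by (simp_all add: l_def T_def)
      have Tc: "T = card {t\<in>{Suc l..n}. t = m \<or> y \<le> esq D (t - Suc m)}"
        by (simp add: T_def pol thpol_def)
      have "(\<Sum>t\<in>{Suc l..n}. mval (esq D) m t y) = real T * y + Vf (esq D) n (Suc m) (l + T)"
        by (rule EQ_pt[OF anti lm Tc])
      then have "ennreal (pre pol m x + (\<Sum>t\<in>{Suc l..n}. mval (esq D) m t y))
          = ennreal (pre pol (Suc m) (x(m:=y)) + Vf (esq D) n (Suc m) (covered pol (x(m:=y)) m))"
        unfolding c pr by (simp only: add.assoc)
      then show ?case using IH by simp
    qed
    have "ennreal (pre pol m x + Vf (esq D) n m (covered pol x (m - 1)))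
        = (\<integral>\<^sup>+ y. ennreal (pre pol m x + (\<Sum>t\<in>{Suc l..n}. mval (esq D) m t y)) \<partial>D)"
      using int_sum_m[OF D int nn p0 lm] by (simp add: l_def)
    also have "\<dots> = (\<integral>\<^sup>+ y. Jint D [Suc m..<Suc n] (\<lambda>x. ennreal (pre pol (Suc n) x)) (x(m:=y)) \<partial>D)"
      by (rule nn_integral_cong_AE[OF pw])
    also have "\<dots> = Jint D [m..<Suc n] (\<lambda>x. ennreal (pre pol (Suc n) x)) x"
      unfolding lst by simp
    finally show "ennreal (pre pol m x + Vf (esq D) n m (covered pol x (m - 1)))
        = Jint D [m..<Suc n] (\<lambda>x. ennreal (pre pol (Suc n) x)) x" .
  qed
qed



lemma comp_meas:
  assumes D: "real_distribution D" and i: "i \<in> {1..n}"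
  shows "(\<lambda>x. x i) \<in> borel_measurable (iid_space D n)"
proof -
  interpret real_distribution D by (rule D)
  have "(\<lambda>x. x i) \<in> measurable (iid_space D n) D"
    unfolding iid_space_def by (rule measurable_component_singleton) (use i in auto)
  then show ?thesis by (simp add: measurable_cong_sets[OF refl events_eq_borel])
qed

lemma cov_meas:
  assumes pm: "\<forall>i\<in>{1..n}. \<forall>l. (\<lambda>x. pol i x l) \<in> measurable M (count_space UNIV)"
  shows "k \<le> n \<Longrightarrow> (\<lambda>x. covered pol x k) \<in> measurable M (count_space UNIV)"
proof (induction k)
  case 0 then show ?case by simp
next
  case (Suc k)
  have f: "(\<lambda>x. l + pol (Suc k) x l) \<in> measurable M (count_space UNIV)" for l
    using measurable_compose[OF pm[rule_format, of "Suc k" l] measurable_count_space[of "\<lambda>m. l + m" UNIV]] Suc.prems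
    by simp
  have "(\<lambda>x. (\<lambda>l x. l + pol (Suc k) x l) (covered pol x k) x) \<in> measurable M (count_space UNIV)"
    by (rule measurable_compose_countable[OF f]) (use Suc in simp)
  then show ?case by simp
qed

lemma cost_meas:
  assumes D: "real_distribution D" and on: "online_alg D n pol"
  shows "(\<lambda>x. ennreal (osdc_cost pol n x)) \<in> borel_measurable (iid_space D n)"
proof -
  have pm: "\<forall>i\<in>{1..n}. \<forall>l. (\<lambda>x. pol i x l) \<in> measurable (iid_space D n) (count_space UNIV)"
    using on by (simp add: online_alg_def)
  have tm: "(\<lambda>x. real (pol i x (covered pol x (i - 1))) * x i) \<in> borel_measurable (iid_space D n)"
    if i: "i \<in> {1..n}" for i
  proof -
    have "(\<lambda>x. pol i x (covered pol x (i - 1))) \<in> measurable (iid_space D n) (count_space UNIV)"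
      by (rule measurable_compose_countable[where f="\<lambda>l x. pol i x l"])
         (use pm i cov_meas[OF pm, of "i - 1"] in auto)
    then have "(\<lambda>x. real (pol i x (covered pol x (i - 1)))) \<in> borel_measurable (iid_space D n)"
      by (rule measurable_compose) simp
    then show ?thesis using comp_meas[OF D i] by (intro borel_measurable_times)
  qed
  show ?thesis unfolding osdc_cost_def
    by (intro measurable_compose[OF _ measurable_ennreal] borel_measurable_sum) (use tm in auto)
qed

lemma thpol_online:
  assumes D: "real_distribution D"
  shows "online_alg D n (thpol D n)"
  unfolding online_alg_def
proof (intro conjI ballI allI impI)
  fix i l x y assume "i \<in> {1..n}" "\<forall>j\<in>{1..i}. x j = (y :: nat \<Rightarrow> real) j"
  then have "x i = y i" by auto
  then show "thpol D n i x l = thpol D n i y l" by (simp add: thpol_def)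
next
  fix i l assume i: "i \<in> {1..n}"
  note xi[measurable] = comp_meas[OF D i]
  show "(\<lambda>x. thpol D n i x l) \<in> measurable (iid_space D n) (count_space UNIV)"
    unfolding thpol_def by measurable
next
  fix i x assume i: "i \<in> {1..n}"
  define S where "S = {t\<in>{Suc (i - 1)..n}. t = i \<or> x i \<le> esq D (t - Suc i)}"
  have mem: "i \<in> S" using i by (auto simp: S_def)
  have fin: "finite S" by (simp add: S_def)
  have "card S \<noteq> 0" using fin mem by auto
  then show "1 \<le> thpol D n i x (i - 1)"
    unfolding thpol_def S_def[symmetric] by simp
qed

lemma repr_top:
  assumes D: "real_distribution D" and f: "f \<in> borel_measurable (iid_space D n)"
  shows "(\<integral>\<^sup>+ x. f x \<partial>iid_space D n) = Jint D [1..<Suc n] f (\<lambda>_. undefined)"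
proof -
  interpret real_distribution D by (rule D)
  have s: "set [1..<Suc n] = {1..n}" by auto
  have ps: "prob_space D" using D by (simp add: real_distribution_def)
  have "Jint D [1..<Suc n] f (\<lambda>_. undefined)
      = (\<integral>\<^sup>+ y. f (merge {} (set [1..<Suc n]) (\<lambda>_. undefined, y)) \<partial>PiM (set [1..<Suc n]) (\<lambda>_. D))"
    apply (rule Jint_repr[OF ps])
    using f by (simp_all only: s Un_empty_left iid_space_def) (simp_all add: space_PiM_empty)
  also have "\<dots> = (\<integral>\<^sup>+ y. f y \<partial>iid_space D n)"
    unfolding s iid_space_def
    by (rule nn_integral_cong) (auto simp: merge_def space_PiM PiE_def extensional_def intro!: arg_cong[where f=f])
  finally show ?thesis by simp
qed

lemma cost_pre: "osdc_cost pol n x = pre pol (Suc n) x"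
  unfolding osdc_cost_def pre_def by (simp add: atLeastLessThanSuc_atLeastAtMost)

theorem mainTheorem3:
  fixes D :: "real measure" and n :: nat
  assumes "real_distribution D"
    and "AE x in D. 0 \<le> x"
    and "integrable D (\<lambda>x. x)"
    and "n \<ge> 1"
    and "strict_mono_on (cdf_support (cdf D)) (cdf D)"
    and "\<exists>F'. continuous_on (cdf_support (cdf D)) F' \<and>
           (\<forall>x\<in>cdf_support (cdf D). (cdf D has_real_derivative F' x) (at x within cdf_support (cdf D)))"
  shows "(\<forall>pol. online_alg D n pol \<longrightarrow>
            ennreal (\<Sum>i=1..n. dval (cdf D) i) \<le> expected_cost D n pol) \<and>
         (\<exists>pol. online_alg D n pol \<and>
            expected_cost D n pol = ennreal (\<Sum>i=1..n. dval (cdf D) i))"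
proof -
  note D = assms(1) and nn = assms(2) and int = assms(3)
  have sumd: "(\<Sum>i=1..n. dval (cdf D) i) = Vf (esq D) n 1 0"
    unfolding Vf_def
  proof (rule sum.cong)
    fix t assume "t \<in> {Suc 0..n}"
    then have "t = Suc (t - 1)" by simp
    then show "dval (cdf D) t = esq D (t - 1)" using dval_esq[OF D int, of "t - 1"] by metis
  qed simp
  have ec: "expected_cost D n pol = Jint D [1..<Suc n] (\<lambda>x. ennreal (pre pol (Suc n) x)) (\<lambda>_. undefined)"
    if on: "online_alg D n pol" for pol
    unfolding expected_cost_def using repr_top[OF D cost_meas[OF D on]] by (simp add: cost_pre)
  have pre1: "pre pol 1 x = 0" for pol x by (simp add: pre_def)
  show ?thesis
  proof (intro conjI allI impI exI)
    fix pol assume on: "online_alg D n pol"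
    have na: "\<forall>i\<in>{1..n}. \<forall>l x y. (\<forall>j\<in>{1..i}. x j = y j) \<longrightarrow> pol i x l = pol i y l"
      and f: "\<forall>i\<in>{1..n}. \<forall>x. 1 \<le> pol i x (i - 1)" using on by (auto simp: online_alg_def)
    have "ennreal (pre pol 1 (\<lambda>_. undefined) + Vf (esq D) n 1 (covered pol (\<lambda>_. undefined) (1 - 1)))
        \<le> Jint D [1..<Suc n] (\<lambda>x. ennreal (pre pol (Suc n) x)) (\<lambda>_. undefined)"
      using DP_lb[OF D int nn na f, of 1] by (simp del: upt_Suc)
    then show "ennreal (\<Sum>i=1..n. dval (cdf D) i) \<le> expected_cost D n pol"
      unfolding ec[OF on] sumd by (simp add: pre_def del: upt_Suc)
  next
    let ?pol = "thpol D n"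
    have on: "online_alg D n ?pol" by (rule thpol_online[OF D])
    then show "online_alg D n ?pol" .
    have na: "\<forall>i\<in>{1..n}. \<forall>l x y. (\<forall>j\<in>{1..i}. x j = y j) \<longrightarrow> ?pol i x l = ?pol i y l"
      and f: "\<forall>i\<in>{1..n}. \<forall>x. 1 \<le> ?pol i x (i - 1)" using on by (auto simp: online_alg_def)
    have "ennreal (pre ?pol 1 (\<lambda>_. undefined) + Vf (esq D) n 1 (covered ?pol (\<lambda>_. undefined) (1 - 1)))
        = Jint D [1..<Suc n] (\<lambda>x. ennreal (pre ?pol (Suc n) x)) (\<lambda>_. undefined)"
      using DP_eq[OF D int nn refl na f, of 1] by (simp del: upt_Suc)
    then show "expected_cost D n ?pol = ennreal (\<Sum>i=1..n. dval (cdf D) i)"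
      unfolding ec[OF on] sumd by (simp add: pre_def del: upt_Suc)
  qed
qed

end
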